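(* Let $(\Theta,\mathbf{Q},\leq)$ be a $\Theta$-projective system of size $t$ in an artin triangulated $R$-category $\mathcal{T}$, with triangles $K(i)\to Q(i)\to\Theta(i)\to K(i)[1]$. If $\mathrm{Hom}_\mathcal{T}(K(j)[2],\Theta(i))=0$ for all $i,j\in[1,t]$, then $(\Theta,\leq)$ is a $\Theta$-system of size $t$ in $\mathcal{T}$.
   Context: Artin triangulated $R$-category: triangulated, $R$ commutative artinian, Hom-sets finitely generated $R$-modules, $R$-bilinear composition, $R$-linear shift, Krull–Schmidt. $\mathfrak{F}(\mathcal{X})$: objects $M$ admitting distinguished triangles $M_{k-1}\to M_k\to X_k\to M_{k-1}[1]$ ($k=0,\dots,n$), $M_{-1}=0=X_0$, $M_n=M$, $X_k\in\mathcal{X}$ for $k\ge1$. A $\Theta$-projective system of size $t$: $\le$ a linear order on $[1,t]$; $\Theta(i)$ non-zero with $\mathrm{Hom}(\Theta(j),\Theta(i))=0$ for $j>i$; $Q(i)$ indecomposable with $Q=\bigoplus Q(i)$ satisfying $\mathrm{Hom}(Q,\Theta(j)[\pm1])=0$ for all $j$; for each $i$ a distinguished triangle $K(i)\to Q(i)\to\Theta(i)\to K(i)[1]$ with $K(i)\in\mathfrak{F}(\{\Theta(j):j>i\})$, $\mathrm{Hom}(K(i)[1],\Theta(i))=0$. A $\Theta$-system of size $t$: linear order $\le$ on $[1,t]$, indecomposable $\Theta(i)$, $\mathrm{Hom}(\Theta(j),\Theta(i))=0$ for $j>i$, $\mathrm{Hom}(\Theta(j),\Theta(i)[1])=0$ for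 $j\ge i$, $\mathrm{Hom}(\Theta(i),\Theta(j)[-1])=0$ for all $i,j$. *)

theory Defs
  imports Main
begin

text \<open>R is the whole of a type 'r of class comm_ring_1. A category is given by
 its object set, hom sets, composition (cmp g f = g o f), identities, the
 R-module structure on hom sets (madd, zer, smul), the shift functor [1]
 (shO on objects, shM on morphisms) and the class Tri of distinguished
 triangles (X, Y, Z, u, v, w) meaning X -u-> Y -v-> Z -w-> X[1].\<close>

record ('o, 'm, 'r) tcat =
  Ob   :: "'o set"
  Hom  :: "'o \<Rightarrow> 'o \<Rightarrow> 'm set"
  cmp  :: "'m \<Rightarrow> 'm \<Rightarrow> 'm"
  idm  :: "'o \<Rightarrow> 'm"
  madd :: "'m \<Rightarrow> 'm \<Rightarrow> 'm"
  zer  :: "'o \<Rightarrow> 'o \<Rightarrow> 'm"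
  smul :: "'r \<Rightarrow> 'm \<Rightarrow> 'm"
  shO  :: "'o \<Rightarrow> 'o"
  shM  :: "'m \<Rightarrow> 'm"
  Tri  :: "('o \<times> 'o \<times> 'o \<times> 'm \<times> 'm \<times> 'm) set"

definition mneg :: "('o, 'm, 'r::comm_ring_1) tcat \<Rightarrow> 'm \<Rightarrow> 'm" where
  "mneg C f = smul C (-1) f"

definition msub :: "('o, 'm, 'r::comm_ring_1) tcat \<Rightarrow> 'm \<Rightarrow> 'm \<Rightarrow> 'm" where
  "msub C f g = madd C f (mneg C g)"

definition msum :: "('o, 'm, 'r) tcat \<Rightarrow> 'o \<Rightarrow> 'o \<Rightarrow> 'm list \<Rightarrow> 'm" where
  "msum C X Y fs = foldr (madd C) fs (zer C X Y)"

definition shinv :: "('o, 'm, 'r) tcat \<Rightarrow> 'o \<Rightarrow> 'o" where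
  "shinv C Y = the_inv_into (Ob C) (shO C) Y"

definition homzero :: "('o, 'm, 'r) tcat \<Rightarrow> 'o \<Rightarrow> 'o \<Rightarrow> bool" where
  "homzero C X Y \<longleftrightarrow> Hom C X Y = {zer C X Y}"

definition is_zero :: "('o, 'm, 'r) tcat \<Rightarrow> 'o \<Rightarrow> bool" where
  "is_zero C X \<longleftrightarrow> X \<in> Ob C \<and> idm C X = zer C X X"

definition is_iso :: "('o, 'm, 'r) tcat \<Rightarrow> 'o \<Rightarrow> 'o \<Rightarrow> 'm \<Rightarrow> bool" where
  "is_iso C X Y f \<longleftrightarrow> f \<in> Hom C X Y \<and>
     (\<exists>g \<in> Hom C Y X. cmp C g f = idm C X \<and> cmp C f g = idm C Y)"

definition category :: "('o, 'm, 'r) tcat \<Rightarrow> bool" where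
  "category C \<longleftrightarrow>
     (\<forall>X Y. (X \<notin> Ob C \<or> Y \<notin> Ob C) \<longrightarrow> Hom C X Y = {}) \<and>
     (\<forall>X Y X' Y'. Hom C X Y \<inter> Hom C X' Y' \<noteq> {} \<longrightarrow> X = X' \<and> Y = Y') \<and>
     (\<forall>X \<in> Ob C. idm C X \<in> Hom C X X) \<and>
     (\<forall>X Y Z f g. f \<in> Hom C X Y \<longrightarrow> g \<in> Hom C Y Z \<longrightarrow> cmp C g f \<in> Hom C X Z) \<and>
     (\<forall>X Y Z W f g h. f \<in> Hom C X Y \<longrightarrow> g \<in> Hom C Y Z \<longrightarrow> h \<in> Hom C Z W \<longrightarrow>
        cmp C h (cmp C g f) = cmp C (cmp C h g) f) \<and>
     (\<forall>X Y f. f \<in> Hom C X Y \<longrightarrow> cmp C (idm C Y) f = f \<and> cmp C f (idm C X) = f)"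

definition r_linear :: "('o, 'm, 'r::comm_ring_1) tcat \<Rightarrow> bool" where
  "r_linear C \<longleftrightarrow>
     (\<forall>X \<in> Ob C. \<forall>Y \<in> Ob C.
        zer C X Y \<in> Hom C X Y \<and>
        (\<forall>f \<in> Hom C X Y. \<forall>g \<in> Hom C X Y. madd C f g \<in> Hom C X Y) \<and>
        (\<forall>r. \<forall>f \<in> Hom C X Y. smul C r f \<in> Hom C X Y) \<and>
        (\<forall>f \<in> Hom C X Y. \<forall>g \<in> Hom C X Y. \<forall>h \<in> Hom C X Y.
           madd C (madd C f g) h = madd C f (madd C g h)) \<and>
        (\<forall>f \<in> Hom C X Y. \<forall>g \<in> Hom C X Y. madd C f g = madd C g f) \<and>
        (\<forall>f \<in> Hom C X Y. madd C f (zer C X Y) = f) \<and>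
        (\<forall>f \<in> Hom C X Y. madd C f (smul C (-1) f) = zer C X Y) \<and>
        (\<forall>f \<in> Hom C X Y. smul C 1 f = f) \<and>
        (\<forall>r s. \<forall>f \<in> Hom C X Y. smul C (r * s) f = smul C r (smul C s f)) \<and>
        (\<forall>r s. \<forall>f \<in> Hom C X Y. smul C (r + s) f = madd C (smul C r f) (smul C s f)) \<and>
        (\<forall>r. \<forall>f \<in> Hom C X Y. \<forall>g \<in> Hom C X Y.
           smul C r (madd C f g) = madd C (smul C r f) (smul C r g))) \<and>
     (\<forall>X Y Z. \<forall>f \<in> Hom C X Y. \<forall>f' \<in> Hom C X Y. \<forall>g \<in> Hom C Y Z. \<forall>g' \<in> Hom C Y Z.
        cmp C g (madd C f f') = madd C (cmp C g f) (cmp C g f') \<and>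
        cmp C (madd C g g') f = madd C (cmp C g f) (cmp C g' f) \<and>
        (\<forall>r. cmp C g (smul C r f) = smul C r (cmp C g f) \<and>
             cmp C (smul C r g) f = smul C r (cmp C g f)))"

definition biprod :: "('o, 'm, 'r) tcat \<Rightarrow> nat set \<Rightarrow> (nat \<Rightarrow> 'o) \<Rightarrow> 'o
                       \<Rightarrow> (nat \<Rightarrow> 'm) \<Rightarrow> (nat \<Rightarrow> 'm) \<Rightarrow> bool" where
  "biprod C I A S \<iota> \<pi> \<longleftrightarrow> finite I \<and> S \<in> Ob C \<and>
     (\<forall>i \<in> I. A i \<in> Ob C \<and> \<iota> i \<in> Hom C (A i) S \<and> \<pi> i \<in> Hom C S (A i)) \<and>
     (\<forall>i \<in> I. \<forall>j \<in> I. cmp C (\<pi> i) (\<iota> j) = (if i = j then idm C (A i) else zer C (A j) (A i))) \<and>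
     msum C S S (map (\<lambda>i. cmp C (\<iota> i) (\<pi> i)) (sorted_list_of_set I)) = idm C S"

definition additive :: "('o, 'm, 'r) tcat \<Rightarrow> bool" where
  "additive C \<longleftrightarrow> (\<exists>Z. is_zero C Z) \<and>
     (\<forall>X \<in> Ob C. \<forall>Y \<in> Ob C. \<exists>S \<iota> \<pi>. biprod C {0, 1} (\<lambda>i. if i = 0 then X else Y) S \<iota> \<pi>)"

definition shift_ok :: "('o, 'm, 'r) tcat \<Rightarrow> bool" where
  "shift_ok C \<longleftrightarrow> bij_betw (shO C) (Ob C) (Ob C) \<and>
     (\<forall>X \<in> Ob C. \<forall>Y \<in> Ob C. bij_betw (shM C) (Hom C X Y) (Hom C (shO C X) (shO C Y))) \<and>
     (\<forall>X \<in> Ob C. shM C (idm C X) = idm C (shO C X)) \<and>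
     (\<forall>X Y Z f g. f \<in> Hom C X Y \<longrightarrow> g \<in> Hom C Y Z \<longrightarrow>
        shM C (cmp C g f) = cmp C (shM C g) (shM C f)) \<and>
     (\<forall>X Y. \<forall>f \<in> Hom C X Y. \<forall>g \<in> Hom C X Y. shM C (madd C f g) = madd C (shM C f) (shM C g)) \<and>
     (\<forall>X Y r. \<forall>f \<in> Hom C X Y. shM C (smul C r f) = smul C r (shM C f))"

definition triangulated_axioms :: "('o, 'm, 'r::comm_ring_1) tcat \<Rightarrow> bool" where
  "triangulated_axioms C \<longleftrightarrow>
   \<comment> \<open>distinguished triangles are triangles\<close>
   (\<forall>X Y Z u v w. (X, Y, Z, u, v, w) \<in> Tri C \<longrightarrow>
      X \<in> Ob C \<and> Y \<in> Ob C \<and> Z \<in> Ob C \<and>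
      u \<in> Hom C X Y \<and> v \<in> Hom C Y Z \<and> w \<in> Hom C Z (shO C X)) \<and>
   \<comment> \<open>TR0: closed under isomorphisms of triangles\<close>
   (\<forall>X Y Z u v w X' Y' Z' u' v' w' a b c.
      (X, Y, Z, u, v, w) \<in> Tri C \<longrightarrow>
      u' \<in> Hom C X' Y' \<longrightarrow> v' \<in> Hom C Y' Z' \<longrightarrow> w' \<in> Hom C Z' (shO C X') \<longrightarrow>
      is_iso C X X' a \<longrightarrow> is_iso C Y Y' b \<longrightarrow> is_iso C Z Z' c \<longrightarrow>
      cmp C b u = cmp C u' a \<longrightarrow> cmp C c v = cmp C v' b \<longrightarrow>
      cmp C (shM C a) w = cmp C w' c \<longrightarrow>
      (X', Y', Z', u', v', w') \<in> Tri C) \<and>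
   \<comment> \<open>TR1\<close>
   (\<forall>X \<in> Ob C. \<forall>Z. is_zero C Z \<longrightarrow>
      (X, X, Z, idm C X, zer C X Z, zer C Z (shO C X)) \<in> Tri C) \<and>
   (\<forall>X Y. \<forall>u \<in> Hom C X Y. \<exists>Z v w. (X, Y, Z, u, v, w) \<in> Tri C) \<and>
   \<comment> \<open>TR2: rotation\<close>
   (\<forall>X Y Z u v w. u \<in> Hom C X Y \<longrightarrow>
      ((X, Y, Z, u, v, w) \<in> Tri C \<longleftrightarrow> (Y, Z, shO C X, v, w, mneg C (shM C u)) \<in> Tri C)) \<and>
   \<comment> \<open>TR3: completion of morphisms of triangles\<close>
   (\<forall>X Y Z u v w X' Y' Z' u' v' w' a b.
      (X, Y, Z, u, v, w) \<in> Tri C \<longrightarrow> (X', Y', Z', u', v', w') \<in> Tri C \<longrightarrow>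
      a \<in> Hom C X X' \<longrightarrow> b \<in> Hom C Y Y' \<longrightarrow> cmp C b u = cmp C u' a \<longrightarrow>
      (\<exists>c \<in> Hom C Z Z'. cmp C c v = cmp C v' b \<and> cmp C (shM C a) w = cmp C w' c)) \<and>
   \<comment> \<open>TR4: octahedral axiom\<close>
   (\<forall>X Y Z Z' X' Y' u v j k l i m n.
      (X, Y, Z', u, j, k) \<in> Tri C \<longrightarrow>
      (Y, Z, X', v, l, i) \<in> Tri C \<longrightarrow>
      (X, Z, Y', cmp C v u, m, n) \<in> Tri C \<longrightarrow>
      (\<exists>f g. (Z', Y', X', f, g, cmp C (shM C j) i) \<in> Tri C \<and>
         cmp C f j = cmp C m v \<and> cmp C n f = k \<and>
         cmp C g m = l \<and> cmp C i g = cmp C (shM C u) n))"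

definition r_ideal :: "'r::comm_ring_1 set \<Rightarrow> bool" where
  "r_ideal I \<longleftrightarrow> 0 \<in> I \<and> (\<forall>a \<in> I. \<forall>b \<in> I. a + b \<in> I) \<and> (\<forall>r. \<forall>a \<in> I. r * a \<in> I)"

definition artinian_ring :: "'r::comm_ring_1 itself \<Rightarrow> bool" where
  "artinian_ring _ \<longleftrightarrow>
     (\<forall>I :: nat \<Rightarrow> 'r set. (\<forall>n. r_ideal (I n)) \<and> (\<forall>n. I (Suc n) \<subseteq> I n) \<longrightarrow>
        (\<exists>N. \<forall>n \<ge> N. I n = I N))"

definition fg_homs :: "('o, 'm, 'r) tcat \<Rightarrow> bool" where
  "fg_homs C \<longleftrightarrow> (\<forall>X \<in> Ob C. \<forall>Y \<in> Ob C. \<exists>gs. set gs \<subseteq> Hom C X Y \<and>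
     (\<forall>f \<in> Hom C X Y. \<exists>cs. length cs = length gs \<and>
        f = msum C X Y (map2 (smul C) cs gs)))"

definition local_end :: "('o, 'm, 'r::comm_ring_1) tcat \<Rightarrow> 'o \<Rightarrow> bool" where
  "local_end C X \<longleftrightarrow> X \<in> Ob C \<and> idm C X \<noteq> zer C X X \<and>
     (\<forall>f \<in> Hom C X X. is_iso C X X f \<or> is_iso C X X (msub C (idm C X) f))"

definition krull_schmidt :: "('o, 'm, 'r::comm_ring_1) tcat \<Rightarrow> bool" where
  "krull_schmidt C \<longleftrightarrow> (\<forall>X \<in> Ob C. \<exists>n A \<iota> \<pi>.
     biprod C {..<n} A X \<iota> \<pi> \<and> (\<forall>i < n. local_end C (A i)))"

definition artin_tri_cat :: "('o, 'm, 'r::comm_ring_1) tcat \<Rightarrow> bool" where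
  "artin_tri_cat C \<longleftrightarrow> artinian_ring TYPE('r) \<and> category C \<and> r_linear C \<and> additive C \<and>
     shift_ok C \<and> triangulated_axioms C \<and> fg_homs C \<and> krull_schmidt C"

definition indecomposable :: "('o, 'm, 'r) tcat \<Rightarrow> 'o \<Rightarrow> bool" where
  "indecomposable C X \<longleftrightarrow> X \<in> Ob C \<and> \<not> is_zero C X \<and>
     (\<forall>A \<iota> \<pi>. biprod C {0, 1} A X \<iota> \<pi> \<longrightarrow> is_zero C (A 0) \<or> is_zero C (A 1))"

text \<open>The filtration class F(Xs): triangles M_(k-1) \<rightarrow> M_k \<rightarrow> X_k \<rightarrow> M_(k-1)[1],
 k = 0..n, with M_(-1) = 0 = X_0, M_n = M, X_k in Xs for k \<ge> 1.
 Here Ms k stands for M_(k-1).\<close>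
definition filt :: "('o, 'm, 'r) tcat \<Rightarrow> 'o set \<Rightarrow> 'o \<Rightarrow> bool" where
  "filt C Xs M \<longleftrightarrow> (\<exists>n Ms Xo f g h.
     is_zero C (Ms 0) \<and> Ms (Suc n) = M \<and> is_zero C (Xo 0) \<and>
     (\<forall>k \<le> n. (Ms k, Ms (Suc k), Xo k, f k, g k, h k) \<in> Tri C) \<and>
     (\<forall>k \<in> {1..n}. Xo k \<in> Xs))"

definition lin_order_on :: "nat set \<Rightarrow> (nat \<Rightarrow> nat \<Rightarrow> bool) \<Rightarrow> bool" where
  "lin_order_on A le \<longleftrightarrow> (\<forall>x \<in> A. le x x) \<and>
     (\<forall>x \<in> A. \<forall>y \<in> A. le x y \<and> le y x \<longrightarrow> x = y) \<and>
     (\<forall>x \<in> A. \<forall>y \<in> A. \<forall>z \<in> A. le x y \<and> le y z \<longrightarrow> le x z) \<and>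
     (\<forall>x \<in> A. \<forall>y \<in> A. le x y \<or> le y x)"

text \<open>Theta-projective system of size t, together with its chosen triangles
 K(i) -\<alpha> i-> Q(i) -\<beta> i-> Theta(i) -\<gamma> i-> K(i)[1].  "j > i" means le i j and j \<noteq> i.\<close>
definition theta_proj_system :: "('o, 'm, 'r::comm_ring_1) tcat \<Rightarrow> nat \<Rightarrow> (nat \<Rightarrow> nat \<Rightarrow> bool)
     \<Rightarrow> (nat \<Rightarrow> 'o) \<Rightarrow> (nat \<Rightarrow> 'o) \<Rightarrow> (nat \<Rightarrow> 'o)
     \<Rightarrow> (nat \<Rightarrow> 'm) \<Rightarrow> (nat \<Rightarrow> 'm) \<Rightarrow> (nat \<Rightarrow> 'm) \<Rightarrow> bool" where
  "theta_proj_system C t le \<Theta> Q K \<alpha> \<beta> \<gamma> \<longleftrightarrow>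
     lin_order_on {1..t} le \<and>
     (\<forall>i \<in> {1..t}. \<Theta> i \<in> Ob C \<and> \<not> is_zero C (\<Theta> i)) \<and>
     (\<forall>i \<in> {1..t}. \<forall>j \<in> {1..t}. le i j \<and> j \<noteq> i \<longrightarrow> homzero C (\<Theta> j) (\<Theta> i)) \<and>
     (\<forall>i \<in> {1..t}. indecomposable C (Q i)) \<and>
     (\<exists>S \<iota> \<pi>. biprod C {1..t} Q S \<iota> \<pi> \<and>
        (\<forall>j \<in> {1..t}. homzero C S (shO C (\<Theta> j)) \<and> homzero C S (shinv C (\<Theta> j)))) \<and>
     (\<forall>i \<in> {1..t}. (K i, Q i, \<Theta> i, \<alpha> i, \<beta> i, \<gamma> i) \<in> Tri C \<and>
        filt C {\<Theta> j | j. j \<in> {1..t} \<and> le i j \<and> j \<noteq> i} (K i) \<and>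
        homzero C (shO C (K i)) (\<Theta> i))"

definition theta_system :: "('o, 'm, 'r::comm_ring_1) tcat \<Rightarrow> nat \<Rightarrow> (nat \<Rightarrow> nat \<Rightarrow> bool)
     \<Rightarrow> (nat \<Rightarrow> 'o) \<Rightarrow> bool" where
  "theta_system C t le \<Theta> \<longleftrightarrow>
     lin_order_on {1..t} le \<and>
     (\<forall>i \<in> {1..t}. indecomposable C (\<Theta> i)) \<and>
     (\<forall>i \<in> {1..t}. \<forall>j \<in> {1..t}. le i j \<and> j \<noteq> i \<longrightarrow> homzero C (\<Theta> j) (\<Theta> i)) \<and>
     (\<forall>i \<in> {1..t}. \<forall>j \<in> {1..t}. le i j \<longrightarrow> homzero C (\<Theta> j) (shO C (\<Theta> i))) \<and>
     (\<forall>i \<in> {1..t}. \<forall>j \<in> {1..t}. homzero C (\<Theta> i) (shinv C (\<Theta> j)))"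

end

theory Submission
  imports Defs
begin

locale atc = fixes C :: "('o,'m,'r::comm_ring_1) tcat"
  assumes atc: "artin_tri_cat C"
begin

lemma cat: "category C" and rl: "r_linear C" and add: "additive C"
  and sh: "shift_ok C" and tr: "triangulated_axioms C" and ks: "krull_schmidt C"
  using atc unfolding artin_tri_cat_def by auto

lemma hom_ob: "f \<in> Hom C X Y \<Longrightarrow> X \<in> Ob C \<and> Y \<in> Ob C"
proof -
  have "\<forall>X Y. (X \<notin> Ob C \<or> Y \<notin> Ob C) \<longrightarrow> Hom C X Y = {}" using cat unfolding category_def by (elim conjE)
  then show "f \<in> Hom C X Y \<Longrightarrow> X \<in> Ob C \<and> Y \<in> Ob C" by blast
qed
lemma hom_uniq: "f \<in> Hom C X Y \<Longrightarrow> f \<in> Hom C X' Y' \<Longrightarrow> X = X' \<and> Y = Y'"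
proof -
  have "\<forall>X Y X' Y'. Hom C X Y \<inter> Hom C X' Y' \<noteq> {} \<longrightarrow> X = X' \<and> Y = Y'" using cat unfolding category_def by (elim conjE)
  then show "f \<in> Hom C X Y \<Longrightarrow> f \<in> Hom C X' Y' \<Longrightarrow> X = X' \<and> Y = Y'" by blast
qed
lemma id_hom: "X \<in> Ob C \<Longrightarrow> idm C X \<in> Hom C X X"
  using cat unfolding category_def by blast
lemma cmp_hom: "f \<in> Hom C X Y \<Longrightarrow> g \<in> Hom C Y Z \<Longrightarrow> cmp C g f \<in> Hom C X Z"
  using cat unfolding category_def by blast
lemma assoc: "f \<in> Hom C X Y \<Longrightarrow> g \<in> Hom C Y Z \<Longrightarrow> h \<in> Hom C Z W \<Longrightarrow>
        cmp C h (cmp C g f) = cmp C (cmp C h g) f"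
  using cat unfolding category_def by blast
lemma id_l: "f \<in> Hom C X Y \<Longrightarrow> cmp C (idm C Y) f = f"
  using cat unfolding category_def by blast
lemma id_r: "f \<in> Hom C X Y \<Longrightarrow> cmp C f (idm C X) = f"
  using cat unfolding category_def by blast

lemma rlA: "\<forall>X \<in> Ob C. \<forall>Y \<in> Ob C.
        zer C X Y \<in> Hom C X Y \<and>
        (\<forall>f \<in> Hom C X Y. \<forall>g \<in> Hom C X Y. madd C f g \<in> Hom C X Y) \<and>
        (\<forall>r. \<forall>f \<in> Hom C X Y. smul C r f \<in> Hom C X Y) \<and>
        (\<forall>f \<in> Hom C X Y. \<forall>g \<in> Hom C X Y. \<forall>h \<in> Hom C X Y.
           madd C (madd C f g) h = madd C f (madd C g h)) \<and>
        (\<forall>f \<in> Hom C X Y. \<forall>g \<in> Hom C X Y. madd C f g = madd C g f) \<and>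
        (\<forall>f \<in> Hom C X Y. madd C f (zer C X Y) = f) \<and>
        (\<forall>f \<in> Hom C X Y. madd C f (smul C (-1) f) = zer C X Y) \<and>
        (\<forall>f \<in> Hom C X Y. smul C 1 f = f) \<and>
        (\<forall>r s. \<forall>f \<in> Hom C X Y. smul C (r * s) f = smul C r (smul C s f)) \<and>
        (\<forall>r s. \<forall>f \<in> Hom C X Y. smul C (r + s) f = madd C (smul C r f) (smul C s f)) \<and>
        (\<forall>r. \<forall>f \<in> Hom C X Y. \<forall>g \<in> Hom C X Y.
           smul C r (madd C f g) = madd C (smul C r f) (smul C r g))"
  using rl unfolding r_linear_def by (rule conjunct1)
lemma rlB: "\<forall>X Y Z. \<forall>f \<in> Hom C X Y. \<forall>f' \<in> Hom C X Y. \<forall>g \<in> Hom C Y Z. \<forall>g' \<in> Hom C Y Z.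
        cmp C g (madd C f f') = madd C (cmp C g f) (cmp C g f') \<and>
        cmp C (madd C g g') f = madd C (cmp C g f) (cmp C g' f) \<and>
        (\<forall>r. cmp C g (smul C r f) = smul C r (cmp C g f) \<and>
             cmp C (smul C r g) f = smul C r (cmp C g f))"
  using rl unfolding r_linear_def by (rule conjunct2)

lemma rlXY: assumes "f \<in> Hom C X Y" shows "zer C X Y \<in> Hom C X Y \<and>
        (\<forall>f \<in> Hom C X Y. \<forall>g \<in> Hom C X Y. madd C f g \<in> Hom C X Y) \<and>
        (\<forall>r. \<forall>f \<in> Hom C X Y. smul C r f \<in> Hom C X Y) \<and>
        (\<forall>f \<in> Hom C X Y. \<forall>g \<in> Hom C X Y. \<forall>h \<in> Hom C X Y.
           madd C (madd C f g) h = madd C f (madd C g h)) \<and>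
        (\<forall>f \<in> Hom C X Y. \<forall>g \<in> Hom C X Y. madd C f g = madd C g f) \<and>
        (\<forall>f \<in> Hom C X Y. madd C f (zer C X Y) = f) \<and>
        (\<forall>f \<in> Hom C X Y. madd C f (smul C (-1) f) = zer C X Y) \<and>
        (\<forall>f \<in> Hom C X Y. smul C 1 f = f) \<and>
        (\<forall>r s. \<forall>f \<in> Hom C X Y. smul C (r * s) f = smul C r (smul C s f)) \<and>
        (\<forall>r s. \<forall>f \<in> Hom C X Y. smul C (r + s) f = madd C (smul C r f) (smul C s f)) \<and>
        (\<forall>r. \<forall>f \<in> Hom C X Y. \<forall>g \<in> Hom C X Y.
           smul C r (madd C f g) = madd C (smul C r f) (smul C r g))"
proof -
  have "X \<in> Ob C" "Y \<in> Ob C" using hom_ob[OF assms] by auto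
  from rlA[rule_format, OF this] show ?thesis .
qed

lemma zer_hom: assumes "X \<in> Ob C" "Y \<in> Ob C" shows "zer C X Y \<in> Hom C X Y"
  using rlA[rule_format, OF assms, THEN conjunct1] .
lemma madd_hom: assumes "f \<in> Hom C X Y" "g \<in> Hom C X Y" shows "madd C f g \<in> Hom C X Y"
  using rlXY[OF assms(1)] assms by (elim conjE) simp_all
lemma smul_hom: assumes "f \<in> Hom C X Y" shows "smul C r f \<in> Hom C X Y"
  using rlXY[OF assms(1)] assms by (elim conjE) simp_all
lemma madd_assoc: assumes "f \<in> Hom C X Y" "g \<in> Hom C X Y" "h \<in> Hom C X Y" shows "madd C (madd C f g) h = madd C f (madd C g h)"
  using rlXY[OF assms(1)] assms by (elim conjE) simp_all
lemma madd_comm: assumes "f \<in> Hom C X Y" "g \<in> Hom C X Y" shows "madd C f g = madd C g f"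
  using rlXY[OF assms(1)] assms by (elim conjE) simp_all
lemma madd_zer: assumes "f \<in> Hom C X Y" shows "madd C f (zer C X Y) = f"
  using rlXY[OF assms(1)] assms by (elim conjE) simp_all
lemma madd_neg: assumes "f \<in> Hom C X Y" shows "madd C f (smul C (-1) f) = zer C X Y"
  using rlXY[OF assms(1)] assms by (elim conjE) simp_all
lemma smul_one: assumes "f \<in> Hom C X Y" shows "smul C 1 f = f"
  using rlXY[OF assms(1)] assms by (elim conjE) simp_all
lemma smul_mult: assumes "f \<in> Hom C X Y" shows "smul C (r * s) f = smul C r (smul C s f)"
  using rlXY[OF assms(1)] assms by (elim conjE) simp_all
lemma smul_madd: assumes "f \<in> Hom C X Y" "g \<in> Hom C X Y" shows "smul C r (madd C f g) = madd C (smul C r f) (smul C r g)"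
  using rlXY[OF assms(1)] assms by (elim conjE) simp_all
lemma cmp_madd_r: assumes "f \<in> Hom C X Y" "f' \<in> Hom C X Y" "g \<in> Hom C Y Z" shows
   "cmp C g (madd C f f') = madd C (cmp C g f) (cmp C g f')"
  using rlB[rule_format, OF assms(1) assms(2) assms(3) assms(3), THEN conjunct1] .
lemma cmp_madd_l: assumes "f \<in> Hom C X Y" "g \<in> Hom C Y Z" "g' \<in> Hom C Y Z" shows
   "cmp C (madd C g g') f = madd C (cmp C g f) (cmp C g' f)"
  using rlB[rule_format, OF assms(1) assms(1) assms(2) assms(3), THEN conjunct2, THEN conjunct1] .
lemma cmp_smul_r: assumes "f \<in> Hom C X Y" "g \<in> Hom C Y Z" shows
   "cmp C g (smul C r f) = smul C r (cmp C g f)"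
  using rlB[rule_format, OF assms(1) assms(1) assms(2) assms(2), THEN conjunct2, THEN conjunct2, rule_format, of r, THEN conjunct1] .
lemma cmp_smul_l: assumes "f \<in> Hom C X Y" "g \<in> Hom C Y Z" shows
   "cmp C (smul C r g) f = smul C r (cmp C g f)"
  using rlB[rule_format, OF assms(1) assms(1) assms(2) assms(2), THEN conjunct2, THEN conjunct2, rule_format, of r, THEN conjunct2] .

lemma idem_zero: assumes "a \<in> Hom C X Y" "madd C a a = a" shows "a = zer C X Y"
proof -
  have n: "smul C (-1) a \<in> Hom C X Y" using assms smul_hom by blast
  have "madd C (madd C a a) (smul C (-1) a) = madd C a (madd C a (smul C (-1) a))"
    using madd_assoc[OF assms(1) assms(1) n] .
  then have "madd C a (smul C (-1) a) = madd C a (zer C X Y)" using assms(2) madd_neg[OF assms(1)] by simp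
  then show ?thesis using madd_neg[OF assms(1)] madd_zer[OF assms(1)] by simp
qed

lemma cmp_zer_r: assumes "g \<in> Hom C Y Z" "X \<in> Ob C" shows "cmp C g (zer C X Y) = zer C X Z"
proof -
  have Y: "Y \<in> Ob C" using assms hom_ob by blast
  have z: "zer C X Y \<in> Hom C X Y" using zer_hom assms Y by blast
  have "madd C (zer C X Y) (zer C X Y) = zer C X Y" using madd_zer z by blast
  then have "madd C (cmp C g (zer C X Y)) (cmp C g (zer C X Y)) = cmp C g (zer C X Y)"
    using cmp_madd_r[OF z z assms(1)] by simp
  then show ?thesis using idem_zero cmp_hom[OF z assms(1)] by blast
qed

lemma cmp_zer_l: assumes "f \<in> Hom C X Y" "Z \<in> Ob C" shows "cmp C (zer C Y Z) f = zer C X Z"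
proof -
  have Y: "Y \<in> Ob C" using assms hom_ob by blast
  have z: "zer C Y Z \<in> Hom C Y Z" using zer_hom assms Y by blast
  have "madd C (zer C Y Z) (zer C Y Z) = zer C Y Z" using madd_zer z by blast
  then have "madd C (cmp C (zer C Y Z) f) (cmp C (zer C Y Z) f) = cmp C (zer C Y Z) f"
    using cmp_madd_l[OF assms(1) z z] by simp
  then show ?thesis using idem_zero cmp_hom[OF assms(1) z] by blast
qed

lemma smul_zer: assumes "X \<in> Ob C" "Y \<in> Ob C" shows "smul C r (zer C X Y) = zer C X Y"
proof -
  have z: "zer C X Y \<in> Hom C X Y" using zer_hom assms by blast
  have "madd C (smul C r (zer C X Y)) (smul C r (zer C X Y)) = smul C r (zer C X Y)"
    using smul_madd[OF z z] madd_zer[OF z] by simp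
  then show ?thesis using idem_zero smul_hom[OF z] by blast
qed

lemma neg_neg: "f \<in> Hom C X Y \<Longrightarrow> smul C (-1) (smul C (-1) f) = f"
  using smul_mult[of f X Y "-1" "-1"] smul_one by simp

lemma madd_cancel: assumes "f \<in> Hom C X Y" "g \<in> Hom C X Y"
  "madd C f (smul C (-1) g) = zer C X Y" shows "f = g"
proof -
  have n: "smul C (-1) g \<in> Hom C X Y" using assms smul_hom by blast
  have "f = madd C f (madd C (smul C (-1) g) g)"
    using madd_comm[OF n assms(2)] madd_neg[OF assms(2)] madd_zer[OF assms(1)] by simp
  also have "\<dots> = madd C (zer C X Y) g" using madd_assoc[OF assms(1) n assms(2)] assms(3) by simp
  also have "\<dots> = g" using madd_comm[OF zer_hom assms(2)] madd_zer[OF assms(2)] hom_ob[OF assms(2)] by simp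
  finally show ?thesis .
qed

lemma shO_ob: "X \<in> Ob C \<Longrightarrow> shO C X \<in> Ob C"
  using sh unfolding shift_ok_def bij_betw_def by blast
lemma shM_bij: "X \<in> Ob C \<Longrightarrow> Y \<in> Ob C \<Longrightarrow> bij_betw (shM C) (Hom C X Y) (Hom C (shO C X) (shO C Y))"
  using sh unfolding shift_ok_def by blast
lemma shM_hom: "f \<in> Hom C X Y \<Longrightarrow> shM C f \<in> Hom C (shO C X) (shO C Y)"
  using shM_bij hom_ob bij_betwE by metis
lemma shM_id: "X \<in> Ob C \<Longrightarrow> shM C (idm C X) = idm C (shO C X)"
  using sh unfolding shift_ok_def by blast
lemma shM_cmp: "f \<in> Hom C X Y \<Longrightarrow> g \<in> Hom C Y Z \<Longrightarrow> shM C (cmp C g f) = cmp C (shM C g) (shM C f)"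
  using sh unfolding shift_ok_def by blast
lemma shM_madd: "f \<in> Hom C X Y \<Longrightarrow> g \<in> Hom C X Y \<Longrightarrow> shM C (madd C f g) = madd C (shM C f) (shM C g)"
  using sh unfolding shift_ok_def by blast
lemma shM_zer: assumes "X \<in> Ob C" "Y \<in> Ob C" shows "shM C (zer C X Y) = zer C (shO C X) (shO C Y)"
proof -
  have z: "zer C X Y \<in> Hom C X Y" using zer_hom assms by blast
  have "madd C (shM C (zer C X Y)) (shM C (zer C X Y)) = shM C (zer C X Y)"
    using shM_madd[OF z z] madd_zer[OF z] by simp
  then show ?thesis using idem_zero shM_hom[OF z] by blast
qed
lemma shM_inj: "f \<in> Hom C X Y \<Longrightarrow> g \<in> Hom C X Y \<Longrightarrow> shM C f = shM C g \<Longrightarrow> f = g"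
  using shM_bij hom_ob unfolding bij_betw_def inj_on_def by metis
lemma shM_surj: "X \<in> Ob C \<Longrightarrow> Y \<in> Ob C \<Longrightarrow> h \<in> Hom C (shO C X) (shO C Y) \<Longrightarrow>
   \<exists>g \<in> Hom C X Y. shM C g = h"
  using shM_bij[of X Y] unfolding bij_betw_def by force
lemma shinv: assumes "Y \<in> Ob C" shows "shinv C Y \<in> Ob C \<and> shO C (shinv C Y) = Y"
proof -
  have b: "bij_betw (shO C) (Ob C) (Ob C)" using sh unfolding shift_ok_def by blast
  show ?thesis unfolding shinv_def
    using the_inv_into_into[of "shO C" "Ob C" Y "Ob C"] f_the_inv_into_f[of "shO C" "Ob C" Y]
      b assms unfolding bij_betw_def by auto
qed


lemma TRhom: "\<forall>X Y Z u v w. (X, Y, Z, u, v, w) \<in> Tri C \<longrightarrow>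
      X \<in> Ob C \<and> Y \<in> Ob C \<and> Z \<in> Ob C \<and>
      u \<in> Hom C X Y \<and> v \<in> Hom C Y Z \<and> w \<in> Hom C Z (shO C X)"
  using tr unfolding triangulated_axioms_def by (elim conjE) assumption
lemma TR1: "\<forall>X \<in> Ob C. \<forall>Z. is_zero C Z \<longrightarrow>
      (X, X, Z, idm C X, zer C X Z, zer C Z (shO C X)) \<in> Tri C"
  using tr unfolding triangulated_axioms_def by (elim conjE) assumption
lemma TR1b: "\<forall>X Y. \<forall>u \<in> Hom C X Y. \<exists>Z v w. (X, Y, Z, u, v, w) \<in> Tri C"
  using tr unfolding triangulated_axioms_def by (elim conjE) assumption
lemma TR2: "\<forall>X Y Z u v w. u \<in> Hom C X Y \<longrightarrow>
      ((X, Y, Z, u, v, w) \<in> Tri C \<longleftrightarrow> (Y, Z, shO C X, v, w, mneg C (shM C u)) \<in> Tri C)"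
  using tr unfolding triangulated_axioms_def by (elim conjE) assumption
lemma TR3: "\<forall>X Y Z u v w X' Y' Z' u' v' w' a b.
      (X, Y, Z, u, v, w) \<in> Tri C \<longrightarrow> (X', Y', Z', u', v', w') \<in> Tri C \<longrightarrow>
      a \<in> Hom C X X' \<longrightarrow> b \<in> Hom C Y Y' \<longrightarrow> cmp C b u = cmp C u' a \<longrightarrow>
      (\<exists>c \<in> Hom C Z Z'. cmp C c v = cmp C v' b \<and> cmp C (shM C a) w = cmp C w' c)"
  using tr unfolding triangulated_axioms_def by (elim conjE) assumption

lemma tri_hom: assumes "(X, Y, Z, u, v, w) \<in> Tri C" shows
  "X \<in> Ob C" "Y \<in> Ob C" "Z \<in> Ob C" "u \<in> Hom C X Y" "v \<in> Hom C Y Z" "w \<in> Hom C Z (shO C X)"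
  using TRhom assms by blast+

lemma tri_rot: assumes "(X, Y, Z, u, v, w) \<in> Tri C"
  shows "(Y, Z, shO C X, v, w, mneg C (shM C u)) \<in> Tri C"
  using TR2 tri_hom(4)[OF assms] assms by blast

lemma tri_TR1: "X \<in> Ob C \<Longrightarrow> is_zero C Z \<Longrightarrow> (X, X, Z, idm C X, zer C X Z, zer C Z (shO C X)) \<in> Tri C"
  using TR1 by blast

lemma zero_ex: "\<exists>Z. is_zero C Z"
  using add unfolding additive_def by blast

lemma zero_ob: "is_zero C Z \<Longrightarrow> Z \<in> Ob C"
  unfolding is_zero_def by blast

lemma zero_src: assumes "is_zero C Z" "f \<in> Hom C Z Y" shows "f = zer C Z Y"
proof -
  have Z: "Z \<in> Ob C" using assms zero_ob by blast
  have "f = cmp C f (idm C Z)" using id_r assms by metis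
  also have "\<dots> = cmp C f (zer C Z Z)" using assms unfolding is_zero_def by simp
  also have "\<dots> = zer C Z Y" using cmp_zer_r assms Z by blast
  finally show ?thesis .
qed

lemma zero_tgt: assumes "is_zero C Z" "f \<in> Hom C Y Z" shows "f = zer C Y Z"
proof -
  have Z: "Z \<in> Ob C" using assms zero_ob by blast
  have "f = cmp C (idm C Z) f" using id_l assms by metis
  also have "\<dots> = cmp C (zer C Z Z) f" using assms unfolding is_zero_def by simp
  also have "\<dots> = zer C Y Z" using cmp_zer_l assms Z by blast
  finally show ?thesis .
qed

lemma zero_shift: assumes "is_zero C Z" shows "is_zero C (shO C Z)"
proof -
  have Z: "Z \<in> Ob C" using assms zero_ob by blast
  have "idm C (shO C Z) = shM C (idm C Z)" using shM_id Z by simp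
  also have "\<dots> = shM C (zer C Z Z)" using assms unfolding is_zero_def by simp
  also have "\<dots> = zer C (shO C Z) (shO C Z)" using shM_zer Z by blast
  finally show ?thesis unfolding is_zero_def using shO_ob Z by blast
qed

lemma tri_comp: assumes T: "(X, Y, Z, u, v, w) \<in> Tri C" shows "cmp C v u = zer C X Z"
proof -
  obtain Z0 where z: "is_zero C Z0" using zero_ex by blast
  note h = tri_hom[OF T]
  have T0: "(X, X, Z0, idm C X, zer C X Z0, zer C Z0 (shO C X)) \<in> Tri C"
    using tri_TR1 h z by blast
  have "cmp C u (idm C X) = cmp C u (idm C X)" by simp
  then obtain c where c: "c \<in> Hom C Z0 Z" "cmp C c (zer C X Z0) = cmp C v u"
    using TR3[rule_format, OF T0 T id_hom[OF h(1)] h(4)] by blast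
  then show ?thesis using cmp_zer_r h by metis
qed

lemma neg_shM_id: assumes "f \<in> Hom C X Y" shows
  "cmp C (shM C f) (mneg C (shM C (idm C X))) = mneg C (shM C f)"
proof -
  have X: "X \<in> Ob C" using hom_ob assms by blast
  show ?thesis unfolding mneg_def using shM_id[OF X] cmp_smul_r[OF id_hom[OF shO_ob[OF X]] shM_hom[OF assms]]
    id_r[OF shM_hom[OF assms]] by simp
qed

lemma exact_cov: assumes T: "(X, Y, Z, u, v, w) \<in> Tri C" and f: "f \<in> Hom C W Y"
  and vf: "cmp C v f = zer C W Z" shows "\<exists>g \<in> Hom C W X. cmp C u g = f"
proof -
  obtain Z0 where z: "is_zero C Z0" using zero_ex by blast
  note h = tri_hom[OF T]
  have W: "W \<in> Ob C" using hom_ob f by blast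
  have Z0: "Z0 \<in> Ob C" using zero_ob z by blast
  have T0: "(W, Z0, shO C W, zer C W Z0, zer C Z0 (shO C W), mneg C (shM C (idm C W))) \<in> Tri C"
    using tri_rot[OF tri_TR1[OF W z]] .
  have T': "(Y, Z, shO C X, v, w, mneg C (shM C u)) \<in> Tri C" using tri_rot[OF T] .
  have b: "zer C Z0 Z \<in> Hom C Z0 Z" using zer_hom Z0 h by blast
  have "cmp C (zer C Z0 Z) (zer C W Z0) = cmp C v f"
    using cmp_zer_r[OF b W] vf by simp
  then obtain c where c: "c \<in> Hom C (shO C W) (shO C X)"
    "cmp C (shM C f) (mneg C (shM C (idm C W))) = cmp C (mneg C (shM C u)) c"
    using TR3[rule_format, OF T0 T' f b] by blast
  have u1: "shM C u \<in> Hom C (shO C X) (shO C Y)" using shM_hom h by blast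
  have f1: "shM C f \<in> Hom C (shO C W) (shO C Y)" using shM_hom f by blast
  have uc: "cmp C (shM C u) c \<in> Hom C (shO C W) (shO C Y)" using cmp_hom c u1 by blast
  have "mneg C (shM C f) = mneg C (cmp C (shM C u) c)"
    using c(2) neg_shM_id[OF f] cmp_smul_l[OF c(1) u1] unfolding mneg_def by simp
  then have e: "shM C f = cmp C (shM C u) c"
    using neg_neg[OF f1] neg_neg[OF uc] unfolding mneg_def by metis
  obtain g where g: "g \<in> Hom C W X" "shM C g = c" using shM_surj[OF W h(1) c(1)] by blast
  have ug: "cmp C u g \<in> Hom C W Y" using cmp_hom g h by blast
  have "shM C (cmp C u g) = shM C f" using shM_cmp[OF g(1) h(4)] g e by simp
  then have "cmp C u g = f" using shM_inj ug f by blast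
  then show ?thesis using g by blast
qed

lemma exact_contra: assumes T: "(X, Y, Z, u, v, w) \<in> Tri C" and f: "f \<in> Hom C Y V"
  and fu: "cmp C f u = zer C X V" shows "\<exists>g \<in> Hom C Z V. cmp C g v = f"
proof -
  obtain Z0 where z: "is_zero C Z0" using zero_ex by blast
  note h = tri_hom[OF T]
  have V: "V \<in> Ob C" using hom_ob f by blast
  have Z0: "Z0 \<in> Ob C" using zero_ob z by blast
  have zz: "zer C Z0 V \<in> Hom C Z0 V" using zer_hom Z0 V by blast
  have z1: "is_zero C (shO C Z0)" using zero_shift z by blast
  have "mneg C (shM C (zer C Z0 V)) = zer C (shO C Z0) (shO C V)"
    unfolding mneg_def using shM_zer[OF Z0 V] smul_zer shO_ob Z0 V by simp
  then have "(V, V, shO C Z0, idm C V, zer C V (shO C Z0), mneg C (shM C (zer C Z0 V))) \<in> Tri C"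
    using tri_TR1[OF V z1] by simp
  then have T0: "(Z0, V, V, zer C Z0 V, idm C V, zer C V (shO C Z0)) \<in> Tri C"
    using TR2[rule_format, OF zz] by blast
  have a: "zer C X Z0 \<in> Hom C X Z0" using zer_hom Z0 h by blast
  have "cmp C f u = cmp C (zer C Z0 V) (zer C X Z0)" using cmp_zer_r[OF zz h(1)] fu by simp
  then obtain c where c: "c \<in> Hom C Z V" "cmp C c v = cmp C (idm C V) f"
    using TR3[rule_format, OF T T0 a f] by blast
  then show ?thesis using id_l f by metis
qed


lemma homzero_I: assumes "X \<in> Ob C" "Y \<in> Ob C" "\<And>f. f \<in> Hom C X Y \<Longrightarrow> f = zer C X Y"
  shows "homzero C X Y"
  unfolding homzero_def using zer_hom assms by blast
lemma homzero_D: "homzero C X Y \<Longrightarrow> f \<in> Hom C X Y \<Longrightarrow> f = zer C X Y"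
  unfolding homzero_def by blast
lemma homzero_ob: "homzero C X Y \<Longrightarrow> X \<in> Ob C \<and> Y \<in> Ob C"
  unfolding homzero_def using hom_ob by blast

lemma zero_homzero_src: "is_zero C Z \<Longrightarrow> Y \<in> Ob C \<Longrightarrow> homzero C Z Y"
  using homzero_I zero_ob zero_src by metis
lemma zero_homzero_tgt: "is_zero C Z \<Longrightarrow> Y \<in> Ob C \<Longrightarrow> homzero C Y Z"
  using homzero_I zero_ob zero_tgt by metis

lemma homzero_shift: assumes "homzero C X Y" shows "homzero C (shO C X) (shO C Y)"
proof -
  have X: "X \<in> Ob C" and Y: "Y \<in> Ob C" using homzero_ob assms by auto
  show ?thesis
  proof (rule homzero_I)
    show "shO C X \<in> Ob C" "shO C Y \<in> Ob C" using shO_ob X Y by auto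
    fix g assume "g \<in> Hom C (shO C X) (shO C Y)"
    then obtain h where "h \<in> Hom C X Y" "shM C h = g" using shM_surj X Y by blast
    then show "g = zer C (shO C X) (shO C Y)" using homzero_D assms shM_zer X Y by metis
  qed
qed

lemma homzero_unshift: assumes "X \<in> Ob C" "Y \<in> Ob C" "homzero C (shO C X) (shO C Y)"
  shows "homzero C X Y"
proof (rule homzero_I[OF assms(1,2)])
  fix f assume f: "f \<in> Hom C X Y"
  have "shM C f = zer C (shO C X) (shO C Y)" using homzero_D[OF assms(3) shM_hom[OF f]] .
  also have "\<dots> = shM C (zer C X Y)" using shM_zer assms by simp
  finally show "f = zer C X Y" using shM_inj f zer_hom assms by blast
qed

lemma tri_rot3: assumes T: "(X, Y, Z, u, v, w) \<in> Tri C"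
  shows "\<exists>u' v' w'. (shO C X, shO C Y, shO C Z, u', v', w') \<in> Tri C"
  using tri_rot[OF tri_rot[OF tri_rot[OF T]]] by blast

lemma filt_contra: assumes F: "filt C Xs M" and Y: "Y \<in> Ob C"
  and H: "\<forall>X \<in> Xs. homzero C X Y" shows "homzero C M Y"
proof -
  obtain n Ms Xo f g h where fi: "is_zero C (Ms 0)" "Ms (Suc n) = M" "is_zero C (Xo 0)"
     "\<forall>k \<le> n. (Ms k, Ms (Suc k), Xo k, f k, g k, h k) \<in> Tri C"
     "\<forall>k \<in> {1..n}. Xo k \<in> Xs" using F unfolding filt_def by blast
  have "\<forall>k. k \<le> Suc n \<longrightarrow> homzero C (Ms k) Y"
  proof (intro allI)
    fix k show "k \<le> Suc n \<longrightarrow> homzero C (Ms k) Y"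
    proof (induction k)
      case 0 then show ?case using zero_homzero_src fi Y by blast
    next
      case (Suc k)
      show ?case
      proof
        assume k: "Suc k \<le> Suc n"
        then have T: "(Ms k, Ms (Suc k), Xo k, f k, g k, h k) \<in> Tri C" using fi by auto
        have IH: "homzero C (Ms k) Y" using Suc k by auto
        have HX: "homzero C (Xo k) Y"
        proof (cases "k = 0")
          case True then show ?thesis using zero_homzero_src fi Y by blast
        next
          case False then have "Xo k \<in> Xs" using fi k by auto
          then show ?thesis using H by blast
        qed
        note th = tri_hom[OF T]
        show "homzero C (Ms (Suc k)) Y"
        proof (rule homzero_I[OF th(2) Y])
          fix \<phi> assume p: "\<phi> \<in> Hom C (Ms (Suc k)) Y"
          have "cmp C \<phi> (f k) = zer C (Ms k) Y" using homzero_D[OF IH] cmp_hom[OF th(4) p] by blast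
          then obtain \<psi> where "\<psi> \<in> Hom C (Xo k) Y" "cmp C \<psi> (g k) = \<phi>" using exact_contra[OF T p] by blast
          then show "\<phi> = zer C (Ms (Suc k)) Y" using homzero_D[OF HX] cmp_zer_l[OF th(5) Y] by metis
        qed
      qed
    qed
  qed
  then show ?thesis using fi by auto
qed

lemma filt_cov: assumes F: "filt C Xs M" and W: "W \<in> Ob C"
  and H: "\<forall>X \<in> Xs. homzero C W (shO C X)" shows "homzero C W (shO C M)"
proof -
  obtain n Ms Xo f g h where fi: "is_zero C (Ms 0)" "Ms (Suc n) = M" "is_zero C (Xo 0)"
     "\<forall>k \<le> n. (Ms k, Ms (Suc k), Xo k, f k, g k, h k) \<in> Tri C"
     "\<forall>k \<in> {1..n}. Xo k \<in> Xs" using F unfolding filt_def by blast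
  have "\<forall>k. k \<le> Suc n \<longrightarrow> homzero C W (shO C (Ms k))"
  proof (intro allI)
    fix k show "k \<le> Suc n \<longrightarrow> homzero C W (shO C (Ms k))"
    proof (induction k)
      case 0 then show ?case using zero_homzero_tgt zero_shift fi W by blast
    next
      case (Suc k)
      show ?case
      proof
        assume k: "Suc k \<le> Suc n"
        then have T0: "(Ms k, Ms (Suc k), Xo k, f k, g k, h k) \<in> Tri C" using fi by auto
        then obtain u' v' w' where T: "(shO C (Ms k), shO C (Ms (Suc k)), shO C (Xo k), u', v', w') \<in> Tri C"
          using tri_rot3 by blast
        have IH: "homzero C W (shO C (Ms k))" using Suc k by auto
        have HX: "homzero C W (shO C (Xo k))"
        proof (cases "k = 0")
          case True then show ?thesis using zero_homzero_tgt zero_shift fi W by blast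
        next
          case False then have "Xo k \<in> Xs" using fi k by auto
          then show ?thesis using H by blast
        qed
        note th = tri_hom[OF T]
        show "homzero C W (shO C (Ms (Suc k)))"
        proof (rule homzero_I[OF W th(2)])
          fix \<phi> assume p: "\<phi> \<in> Hom C W (shO C (Ms (Suc k)))"
          have "cmp C v' \<phi> = zer C W (shO C (Xo k))" using homzero_D[OF HX] cmp_hom[OF p th(5)] by blast
          then obtain \<psi> where "\<psi> \<in> Hom C W (shO C (Ms k))" "cmp C u' \<psi> = \<phi>" using exact_cov[OF T p] by blast
          then show "\<phi> = zer C W (shO C (Ms (Suc k)))" using homzero_D[OF IH] cmp_zer_r[OF th(4) W] by metis
        qed
      qed
    qed
  qed
  then show ?thesis using fi by auto
qed

lemma summand: assumes B: "biprod C I A S \<iota> \<pi>" and i: "i \<in> I" and H: "homzero C S Y"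
  shows "homzero C (A i) Y"
proof -
  have bi: "A i \<in> Ob C" "\<iota> i \<in> Hom C (A i) S" "\<pi> i \<in> Hom C S (A i)"
     "cmp C (\<pi> i) (\<iota> i) = idm C (A i)"
    using B i unfolding biprod_def by auto
  have Y: "Y \<in> Ob C" using homzero_ob H by blast
  show ?thesis
  proof (rule homzero_I[OF bi(1) Y])
    fix f assume f: "f \<in> Hom C (A i) Y"
    have "f = cmp C f (cmp C (\<pi> i) (\<iota> i))" using bi id_r f by metis
    also have "\<dots> = cmp C (cmp C f (\<pi> i)) (\<iota> i)" using assoc bi f by blast
    also have "\<dots> = cmp C (zer C S Y) (\<iota> i)" using homzero_D[OF H] cmp_hom bi f by metis
    also have "\<dots> = zer C (A i) Y" using cmp_zer_l bi Y by blast
    finally show "f = zer C (A i) Y" .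
  qed
qed


lemma split_retract: assumes A: "A \<in> Ob C" and nA: "\<not> is_zero C A"
  and i: "i \<in> Hom C A X" and p: "p \<in> Hom C X A" and pi: "cmp C p i = idm C A"
  and ind: "indecomposable C X"
  shows "cmp C i p = idm C X"
proof -
  have X: "X \<in> Ob C" using hom_ob i by blast
  obtain Z v w where T0: "(X, A, Z, p, v, w) \<in> Tri C" using TR1b p by blast
  note h0 = tri_hom[OF T0]
  have "cmp C v p = zer C X Z" using tri_comp[OF T0] .
  have v0: "v = zer C A Z"
  proof -
    have "v = cmp C v (cmp C p i)" using pi id_r h0 by metis
    also have "\<dots> = cmp C (cmp C v p) i" using assoc i p h0 by blast
    also have "\<dots> = zer C A Z" using \<open>cmp C v p = zer C X Z\<close> cmp_zer_l i h0 by metis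
    finally show ?thesis .
  qed
  define B where "B = shinv C Z"
  have B: "B \<in> Ob C" "shO C B = Z" using shinv h0 B_def by auto
  have mw: "mneg C w \<in> Hom C (shO C B) (shO C X)" using smul_hom h0 B unfolding mneg_def by simp
  obtain u where u: "u \<in> Hom C B X" "shM C u = mneg C w" using shM_surj[OF B(1) X mw] by blast
  have "mneg C (shM C u) = w" using u neg_neg h0 unfolding mneg_def by metis
  then have "(X, A, shO C B, p, zer C A (shO C B), mneg C (shM C u)) \<in> Tri C"
    using T0 v0 B by simp
  then have T1: "(B, X, A, u, p, zer C A (shO C B)) \<in> Tri C"
    using TR2[rule_format, OF u(1)] by blast
  define A' where "A' = shinv C A"
  have A': "A' \<in> Ob C" "shO C A' = A" using shinv A A'_def by auto
  have z0: "zer C A' B \<in> Hom C A' B" using zer_hom A' B by blast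
  have "mneg C (shM C (zer C A' B)) = zer C A (shO C B)"
    unfolding mneg_def using shM_zer[OF A'(1) B(1)] smul_zer[OF A h0(3)] A' B by simp
  then have "(B, X, shO C A', u, p, mneg C (shM C (zer C A' B))) \<in> Tri C" using T1 A' by simp
  then have T2: "(A', B, X, zer C A' B, u, p) \<in> Tri C" using TR2[rule_format, OF z0] by blast
  define ip where "ip = cmp C i p"
  have ip: "ip \<in> Hom C X X" using cmp_hom p i ip_def by blast
  define \<phi> where "\<phi> = madd C (idm C X) (smul C (-1) ip)"
  have nip: "smul C (-1) ip \<in> Hom C X X" using smul_hom ip by blast
  have \<phi>: "\<phi> \<in> Hom C X X" using madd_hom id_hom X nip \<phi>_def by blast
  have pip: "cmp C p ip = p" using assoc[OF p i p] pi id_l p ip_def by metis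
  have "cmp C p \<phi> = madd C (cmp C p (idm C X)) (smul C (-1) (cmp C p ip))"
    using cmp_madd_r[OF id_hom[OF X] nip p] cmp_smul_r[OF ip p] \<phi>_def by simp
  also have "\<dots> = zer C X A" using pip id_r p madd_neg by metis
  finally have p\<phi>: "cmp C p \<phi> = zer C X A" .
  obtain q where q: "q \<in> Hom C X B" "cmp C u q = \<phi>" using exact_cov[OF T1 \<phi> p\<phi>] by blast
  have pu: "cmp C p u = zer C B A" using tri_comp[OF T1] .
  have ipu: "cmp C ip u = zer C B X"
    using assoc[OF u(1) p i] pu cmp_zer_r i B ip_def by metis
  have \<phi>u: "cmp C \<phi> u = u"
  proof -
    have "cmp C \<phi> u = madd C (cmp C (idm C X) u) (smul C (-1) (cmp C ip u))"
      using cmp_madd_l[OF u(1) id_hom[OF X] nip] cmp_smul_l[OF u(1) ip] \<phi>_def by simp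
    also have "\<dots> = u" using ipu id_l u smul_zer B X madd_zer by metis
    finally show ?thesis .
  qed
  have qu: "cmp C q u \<in> Hom C B B" using cmp_hom u q by blast
  have nidB: "smul C (-1) (idm C B) \<in> Hom C B B" using smul_hom id_hom B by blast
  have "cmp C u (madd C (cmp C q u) (smul C (-1) (idm C B)))
        = madd C (cmp C u (cmp C q u)) (smul C (-1) (cmp C u (idm C B)))"
    using cmp_madd_r[OF qu nidB u(1)] cmp_smul_r[OF id_hom[OF B(1)] u(1)] by simp
  also have "\<dots> = zer C B X" using assoc[OF u(1) q(1) u(1)] q \<phi>u id_r u madd_neg by metis
  finally have "cmp C u (madd C (cmp C q u) (smul C (-1) (idm C B))) = zer C B X" .
  then obtain r where "r \<in> Hom C B A'" "cmp C (zer C A' B) r = madd C (cmp C q u) (smul C (-1) (idm C B))"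
    using exact_cov[OF T2 madd_hom[OF qu nidB]] by blast
  then have "madd C (cmp C q u) (smul C (-1) (idm C B)) = zer C B B" using cmp_zer_l B by metis
  then have quid: "cmp C q u = idm C B" using madd_cancel qu id_hom B by blast
  have qi: "cmp C q i \<in> Hom C A B" using cmp_hom i q by blast
  have "cmp C u (cmp C q i) = cmp C \<phi> i" using assoc[OF i q(1) u(1)] q by simp
  also have "\<dots> = madd C (cmp C (idm C X) i) (smul C (-1) (cmp C ip i))"
    using cmp_madd_l[OF i id_hom[OF X] nip] cmp_smul_l[OF i ip] \<phi>_def by simp
  also have "\<dots> = zer C A X"
  proof -
    have "cmp C ip i = i" using assoc[OF i p i] pi id_r i ip_def by metis
    then show ?thesis using id_l i madd_neg by metis
  qed
  finally have "cmp C u (cmp C q i) = zer C A X" .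
  then obtain r where "r \<in> Hom C A A'" "cmp C (zer C A' B) r = cmp C q i"
    using exact_cov[OF T2 qi] by blast
  then have qi0: "cmp C q i = zer C A B" using cmp_zer_l B by metis
  define AA where "AA = (\<lambda>k::nat. if k = 0 then A else B)"
  define \<iota>' where "\<iota>' = (\<lambda>k::nat. if k = 0 then i else u)"
  define \<pi>' where "\<pi>' = (\<lambda>k::nat. if k = 0 then p else q)"
  have sl: "sorted_list_of_set {0,1::nat} = [0,1]" by simp
  have uq: "cmp C u q \<in> Hom C X X" using cmp_hom u q by blast
  have "madd C ip \<phi> = idm C X"
  proof -
    have "madd C ip \<phi> = madd C ip (madd C (smul C (-1) ip) (idm C X))"
      using madd_comm nip id_hom X \<phi>_def by metis
    also have "\<dots> = madd C (madd C ip (smul C (-1) ip)) (idm C X)"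
      using madd_assoc[OF ip nip id_hom[OF X]] by simp
    also have "\<dots> = idm C X" using madd_neg ip madd_comm madd_zer id_hom X zer_hom by metis
    finally show ?thesis .
  qed
  then have ms: "msum C X X (map (\<lambda>k. cmp C (\<iota>' k) (\<pi>' k)) (sorted_list_of_set {0,1})) = idm C X"
    unfolding msum_def sl \<iota>'_def \<pi>'_def using q madd_zer uq ip_def by simp
  have bp: "biprod C {0, 1} AA X \<iota>' \<pi>'"
    unfolding biprod_def
  proof (intro conjI)
    show "finite {0,1::nat}" by simp
    show "X \<in> Ob C" using X .
    show "\<forall>k\<in>{0, 1}. AA k \<in> Ob C \<and> \<iota>' k \<in> Hom C (AA k) X \<and> \<pi>' k \<in> Hom C X (AA k)"
      unfolding AA_def \<iota>'_def \<pi>'_def using A B i p u q by auto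
    show "\<forall>k\<in>{0, 1}. \<forall>l\<in>{0, 1}. cmp C (\<pi>' k) (\<iota>' l) = (if k = l then idm C (AA k) else zer C (AA l) (AA k))"
      unfolding AA_def \<iota>'_def \<pi>'_def using pi quid pu qi0 by auto
    show "msum C X X (map (\<lambda>k. cmp C (\<iota>' k) (\<pi>' k)) (sorted_list_of_set {0, 1})) = idm C X" using ms .
  qed
  have "is_zero C (AA 0) \<or> is_zero C (AA 1)" using ind bp unfolding indecomposable_def by blast
  then have zB: "is_zero C B" using nA unfolding AA_def by simp
  then have "q = zer C X B" using zero_tgt q by blast
  then have "\<phi> = zer C X X" using q cmp_zer_r u X by metis
  then have "idm C X = ip" using madd_cancel[OF id_hom[OF X] ip] \<phi>_def by simp
  then show ?thesis using ip_def by simp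
qed


lemma iso_transfer: assumes i: "i \<in> Hom C A X" and p: "p \<in> Hom C X A"
  and pi: "cmp C p i = idm C A" and ip: "cmp C i p = idm C X"
  and ch: "\<chi> \<in> Hom C X X" and iso: "is_iso C A A (cmp C p (cmp C \<chi> i))"
  shows "is_iso C X X \<chi>"
proof -
  obtain g where g: "g \<in> Hom C A A" "cmp C g (cmp C p (cmp C \<chi> i)) = idm C A"
    "cmp C (cmp C p (cmp C \<chi> i)) g = idm C A" using iso unfolding is_iso_def by blast
  have ci: "cmp C \<chi> i \<in> Hom C A X" using cmp_hom i ch by blast
  have pc: "cmp C p \<chi> \<in> Hom C X A" using cmp_hom p ch by blast
  define h where "h = cmp C i (cmp C g p)"
  have gp: "cmp C g p \<in> Hom C X A" using cmp_hom g p by blast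
  have h: "h \<in> Hom C X X" using cmp_hom gp i h_def by blast
  have e1: "cmp C \<chi> i = cmp C i (cmp C p (cmp C \<chi> i))"
    using assoc[OF ci p i] ip id_l ci by metis
  have e2: "cmp C p \<chi> = cmp C (cmp C p (cmp C \<chi> i)) p"
    using assoc[OF p i pc] assoc[OF i ch p] ip id_r pc by metis
  have "cmp C \<chi> h = cmp C (cmp C \<chi> i) (cmp C g p)" using assoc[OF gp i ch] h_def by simp
  also have "\<dots> = cmp C i (cmp C (cmp C p (cmp C \<chi> i)) (cmp C g p))"
    using e1 assoc[OF gp cmp_hom[OF ci p] i] by metis
  also have "\<dots> = cmp C i p" using assoc[OF p g(1) cmp_hom[OF ci p]] g(3) id_l p by metis
  finally have r1: "cmp C \<chi> h = idm C X" using ip by simp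
  have "cmp C h \<chi> = cmp C i (cmp C g (cmp C p \<chi>))"
    using assoc[OF ch p g(1)] assoc[OF ch gp i] h_def by metis
  also have "\<dots> = cmp C i (cmp C (cmp C g (cmp C p (cmp C \<chi> i))) p)"
    using e2 assoc[OF p cmp_hom[OF ci p] g(1)] by metis
  also have "\<dots> = cmp C i p" using g(2) id_l p by metis
  finally have r2: "cmp C h \<chi> = idm C X" using ip by simp
  show ?thesis unfolding is_iso_def using ch h r1 r2 by blast
qed

lemma indec_local: assumes ind: "indecomposable C X" and psi: "\<psi> \<in> Hom C X X"
  shows "is_iso C X X \<psi> \<or> is_iso C X X (msub C (idm C X) \<psi>)"
proof -
  have X: "X \<in> Ob C" using ind unfolding indecomposable_def by blast
  obtain n A \<iota> \<pi> where b: "biprod C {..<n} A X \<iota> \<pi>" and loc: "\<forall>i < n. local_end C (A i)"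
    using ks X unfolding krull_schmidt_def by blast
  have n: "0 < n"
  proof (rule ccontr)
    assume "\<not> 0 < n" then have "n = 0" by simp
    then have "zer C X X = idm C X" using b unfolding biprod_def msum_def by simp
    then show False using ind X unfolding indecomposable_def is_zero_def by simp
  qed
  have bi: "A 0 \<in> Ob C" "\<iota> 0 \<in> Hom C (A 0) X" "\<pi> 0 \<in> Hom C X (A 0)"
     "cmp C (\<pi> 0) (\<iota> 0) = idm C (A 0)"
    using b n unfolding biprod_def by auto
  have lA: "local_end C (A 0)" using loc n by blast
  then have nz: "\<not> is_zero C (A 0)" unfolding local_end_def is_zero_def by blast
  have ip: "cmp C (\<iota> 0) (\<pi> 0) = idm C X" using split_retract[OF bi(1) nz bi(2) bi(3) bi(4) ind] .
  define f where "f = cmp C (\<pi> 0) (cmp C \<psi> (\<iota> 0))"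
  have f: "f \<in> Hom C (A 0) (A 0)" using cmp_hom bi psi f_def by metis
  have case2: "cmp C (\<pi> 0) (cmp C (msub C (idm C X) \<psi>) (\<iota> 0)) = msub C (idm C (A 0)) f"
  proof -
    have n\<psi>: "smul C (-1) \<psi> \<in> Hom C X X" using smul_hom psi by blast
    have "cmp C (msub C (idm C X) \<psi>) (\<iota> 0) = madd C (\<iota> 0) (smul C (-1) (cmp C \<psi> (\<iota> 0)))"
      unfolding msub_def mneg_def using cmp_madd_l[OF bi(2) id_hom[OF X] n\<psi>] cmp_smul_l[OF bi(2) psi] id_l bi by metis
    moreover have "cmp C (\<pi> 0) (madd C (\<iota> 0) (smul C (-1) (cmp C \<psi> (\<iota> 0)))) = msub C (idm C (A 0)) f"
      unfolding msub_def mneg_def f_def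
      using cmp_madd_r[OF bi(2) smul_hom[OF cmp_hom[OF bi(2) psi]] bi(3)]
        cmp_smul_r[OF cmp_hom[OF bi(2) psi] bi(3)] bi(4) by simp
    ultimately show ?thesis by simp
  qed
  have "is_iso C (A 0) (A 0) f \<or> is_iso C (A 0) (A 0) (msub C (idm C (A 0)) f)"
    using lA f unfolding local_end_def by blast
  moreover have "msub C (idm C X) \<psi> \<in> Hom C X X"
    unfolding msub_def mneg_def using madd_hom id_hom X smul_hom psi by blast
  ultimately show ?thesis
    using iso_transfer[OF bi(2) bi(3) bi(4) ip] psi case2 f_def by metis
qed


lemma vanish_via_tri: assumes T: "(K, Q, Th, a, b, c) \<in> Tri C"
  and hQ: "homzero C Q Y" and hK: "homzero C (shO C K) Y" shows "homzero C Th Y"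
proof -
  note h = tri_hom[OF T]
  have R: "(Q, Th, shO C K, b, c, mneg C (shM C a)) \<in> Tri C" using tri_rot[OF T] .
  have Y: "Y \<in> Ob C" using homzero_ob hQ by blast
  show ?thesis
  proof (rule homzero_I[OF h(3) Y])
    fix f assume f: "f \<in> Hom C Th Y"
    have "cmp C f b = zer C Q Y" using homzero_D[OF hQ cmp_hom[OF h(5) f]] .
    then obtain g where g: "g \<in> Hom C (shO C K) Y" "cmp C g c = f" using exact_contra[OF R f] by blast
    then show "f = zer C Th Y" using homzero_D[OF hK] cmp_zer_l[OF h(6) Y] by metis
  qed
qed

lemma theta_indec: assumes T: "(K, Q, Th, a, b, c) \<in> Tri C"
  and indQ: "indecomposable C Q" and nz: "\<not> is_zero C Th"
  and h1: "homzero C Q (shO C K)" and h2: "homzero C (shO C K) Th"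
  shows "indecomposable C Th"
proof -
  note h = tri_hom[OF T]
  have R: "(Q, Th, shO C K, b, c, mneg C (shM C a)) \<in> Tri C" using tri_rot[OF T] .
  have K1: "shO C K \<in> Ob C" using shO_ob h by blast
  have kill: "is_zero C B" if p: "p \<in> Hom C Th B" and i: "i \<in> Hom C B Th"
    and pi: "cmp C p i = idm C B" and pb: "cmp C p b = zer C Q B" for p i B
  proof -
    have B: "B \<in> Ob C" using hom_ob p by blast
    obtain g where g: "g \<in> Hom C (shO C K) B" "cmp C g c = p" using exact_contra[OF R p pb] by blast
    have "cmp C i g = zer C (shO C K) Th" using homzero_D[OF h2 cmp_hom[OF g(1) i]] .
    then have "cmp C (cmp C p i) g = cmp C p (zer C (shO C K) Th)" using assoc[OF g(1) i p] by simp
    then have "g = zer C (shO C K) B" using pi id_l g cmp_zer_r[OF p K1] by metis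
    then have "p = zer C Th B" using g cmp_zer_l[OF h(6) B] by metis
    then have "idm C B = zer C B B" using pi cmp_zer_l[OF i B] by metis
    then show ?thesis unfolding is_zero_def using B by blast
  qed
  show ?thesis unfolding indecomposable_def
  proof (intro conjI allI impI)
    show "Th \<in> Ob C" using h by blast
    show "\<not> is_zero C Th" using nz .
    fix A \<iota> \<pi> assume bp: "biprod C {0, 1} A Th \<iota> \<pi>"
    have bi: "A 0 \<in> Ob C" "A 1 \<in> Ob C" "\<iota> 0 \<in> Hom C (A 0) Th" "\<iota> 1 \<in> Hom C (A 1) Th"
      "\<pi> 0 \<in> Hom C Th (A 0)" "\<pi> 1 \<in> Hom C Th (A 1)"
      "cmp C (\<pi> 0) (\<iota> 0) = idm C (A 0)" "cmp C (\<pi> 1) (\<iota> 1) = idm C (A 1)"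
      "cmp C (\<pi> 1) (\<iota> 0) = zer C (A 0) (A 1)"
      using bp unfolding biprod_def by auto
    define e where "e = cmp C (\<iota> 0) (\<pi> 0)"
    have e: "e \<in> Hom C Th Th" using cmp_hom bi e_def by blast
    have eb: "cmp C e b \<in> Hom C Q Th" using cmp_hom e h by blast
    have "cmp C c (cmp C e b) = zer C Q (shO C K)" using homzero_D[OF h1 cmp_hom[OF eb h(6)]] .
    then obtain \<psi> where psi: "\<psi> \<in> Hom C Q Q" "cmp C b \<psi> = cmp C e b" using exact_cov[OF R eb] by blast
    have \<pi>0e: "cmp C (\<pi> 0) e = \<pi> 0" using assoc[OF bi(5) bi(3) bi(5)] bi(7) id_l bi(5) e_def by metis
    have \<pi>1e: "cmp C (\<pi> 1) e = zer C Th (A 1)" using assoc[OF bi(5) bi(3) bi(6)] bi(9) cmp_zer_l bi e_def by metis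
    have "is_iso C Q Q \<psi> \<or> is_iso C Q Q (msub C (idm C Q) \<psi>)" using indec_local[OF indQ psi(1)] .
    then show "is_zero C (A 0) \<or> is_zero C (A 1)"
    proof
      assume "is_iso C Q Q \<psi>"
      then obtain \<psi>' where \<psi>': "\<psi>' \<in> Hom C Q Q" "cmp C \<psi> \<psi>' = idm C Q" unfolding is_iso_def by blast
      have "cmp C (\<pi> 1) b = cmp C (\<pi> 1) (cmp C b (cmp C \<psi> \<psi>'))" using \<psi>' id_r h by metis
      also have "\<dots> = cmp C (cmp C (\<pi> 1) (cmp C b \<psi>)) \<psi>'"
        using assoc[OF \<psi>'(1) psi(1) h(5)] assoc[OF \<psi>'(1) cmp_hom[OF psi(1) h(5)] bi(6)] by metis
      also have "\<dots> = cmp C (cmp C (cmp C (\<pi> 1) e) b) \<psi>'" using psi assoc[OF h(5) e bi(6)] by metis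
      also have "\<dots> = zer C Q (A 1)" using \<pi>1e cmp_zer_l h \<psi>' bi by metis
      finally have "cmp C (\<pi> 1) b = zer C Q (A 1)" .
      then show ?thesis using kill[OF bi(6) bi(4) bi(8)] by blast
    next
      assume "is_iso C Q Q (msub C (idm C Q) \<psi>)"
      then obtain \<rho> where \<rho>: "\<rho> \<in> Hom C Q Q" "cmp C (msub C (idm C Q) \<psi>) \<rho> = idm C Q" unfolding is_iso_def by blast
      have Q: "Q \<in> Ob C" using h by blast
      have n\<psi>: "smul C (-1) \<psi> \<in> Hom C Q Q" using smul_hom psi by blast
      have ms: "msub C (idm C Q) \<psi> \<in> Hom C Q Q" unfolding msub_def mneg_def using madd_hom id_hom Q n\<psi> by blast
      have pb: "cmp C (\<pi> 0) b \<in> Hom C Q (A 0)" using cmp_hom h bi by blast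
      have "cmp C (\<pi> 0) (cmp C b \<psi>) = cmp C (\<pi> 0) b"
        using psi(2) assoc[OF h(5) e bi(5)] \<pi>0e by metis
      then have pbpsi: "cmp C (cmp C (\<pi> 0) b) \<psi> = cmp C (\<pi> 0) b" using assoc[OF psi(1) h(5) bi(5)] by metis
      have "cmp C (cmp C (\<pi> 0) b) (msub C (idm C Q) \<psi>)
          = madd C (cmp C (cmp C (\<pi> 0) b) (idm C Q)) (smul C (-1) (cmp C (cmp C (\<pi> 0) b) \<psi>))"
        unfolding msub_def mneg_def using cmp_madd_r[OF id_hom[OF Q] n\<psi> pb] cmp_smul_r[OF psi(1) pb] by simp
      also have "\<dots> = zer C Q (A 0)" using pbpsi id_r pb madd_neg by metis
      finally have z: "cmp C (cmp C (\<pi> 0) b) (msub C (idm C Q) \<psi>) = zer C Q (A 0)" .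
      have "cmp C (\<pi> 0) b = cmp C (cmp C (\<pi> 0) b) (cmp C (msub C (idm C Q) \<psi>) \<rho>)" using \<rho> id_r pb by metis
      also have "\<dots> = cmp C (cmp C (cmp C (\<pi> 0) b) (msub C (idm C Q) \<psi>)) \<rho>" using assoc[OF \<rho>(1) ms pb] by simp
      also have "\<dots> = zer C Q (A 0)" using z cmp_zer_l \<rho> bi by metis
      finally have "cmp C (\<pi> 0) b = zer C Q (A 0)" .
      then show ?thesis using kill[OF bi(5) bi(3) bi(7)] by blast
    qed
  qed
qed

end

theorem corollary6p3:
  fixes C :: "('o, 'm, 'r::comm_ring_1) tcat"
    and t :: nat and le :: "nat \<Rightarrow> nat \<Rightarrow> bool"
    and \<Theta> Q K :: "nat \<Rightarrow> 'o" and \<alpha> \<beta> \<gamma> :: "nat \<Rightarrow> 'm"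
  assumes "artin_tri_cat C"
    and "theta_proj_system C t le \<Theta> Q K \<alpha> \<beta> \<gamma>"
    and "\<forall>i \<in> {1..t}. \<forall>j \<in> {1..t}. homzero C (shO C (shO C (K j))) (\<Theta> i)"
  shows "theta_system C t le \<Theta>"
proof -
  interpret atc C using assms(1) by unfold_locales
  have lo: "lin_order_on {1..t} le"
    and Th: "\<forall>i \<in> {1..t}. \<Theta> i \<in> Ob C \<and> \<not> is_zero C (\<Theta> i)"
    and hz: "\<forall>i \<in> {1..t}. \<forall>j \<in> {1..t}. le i j \<and> j \<noteq> i \<longrightarrow> homzero C (\<Theta> j) (\<Theta> i)"
    and indQ: "\<forall>i \<in> {1..t}. indecomposable C (Q i)"
    and ex: "\<exists>S \<iota> \<pi>. biprod C {1..t} Q S \<iota> \<pi> \<and>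
        (\<forall>j \<in> {1..t}. homzero C S (shO C (\<Theta> j)) \<and> homzero C S (shinv C (\<Theta> j)))"
    and tri: "\<forall>i \<in> {1..t}. (K i, Q i, \<Theta> i, \<alpha> i, \<beta> i, \<gamma> i) \<in> Tri C \<and>
        filt C {\<Theta> j | j. j \<in> {1..t} \<and> le i j \<and> j \<noteq> i} (K i) \<and>
        homzero C (shO C (K i)) (\<Theta> i)"
    using assms(2) unfolding theta_proj_system_def by blast+
  obtain S \<iota> \<pi> where bp: "biprod C {1..t} Q S \<iota> \<pi>"
    and hS: "\<forall>j \<in> {1..t}. homzero C S (shO C (\<Theta> j)) \<and> homzero C S (shinv C (\<Theta> j))"
    using ex by blast
  have hQ1: "homzero C (Q i) (shO C (\<Theta> j))" if "i \<in> {1..t}" "j \<in> {1..t}" for i j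
    using summand[OF bp that(1)] hS that(2) by blast
  have hQ2: "homzero C (Q i) (shinv C (\<Theta> j))" if "i \<in> {1..t}" "j \<in> {1..t}" for i j
    using summand[OF bp that(1)] hS that(2) by blast
  have trans: "le a c" if "a \<in> {1..t}" "b \<in> {1..t}" "c \<in> {1..t}" "le a b" "le b c" for a b c
    using lo that unfolding lin_order_on_def by blast
  have antis: "a = b" if "a \<in> {1..t}" "b \<in> {1..t}" "le a b" "le b a" for a b
    using lo that unfolding lin_order_on_def by blast
  show ?thesis unfolding theta_system_def
  proof (intro conjI ballI impI)
    show "lin_order_on {1..t} le" using lo .
  next
    fix i assume i: "i \<in> {1..t}"
    have T: "(K i, Q i, \<Theta> i, \<alpha> i, \<beta> i, \<gamma> i) \<in> Tri C" using tri i by blast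
    have W: "Q i \<in> Ob C" using tri_hom[OF T] by blast
    have h1: "homzero C (Q i) (shO C (K i))"
    proof (rule filt_cov[OF _ W])
      show "filt C {\<Theta> j | j. j \<in> {1..t} \<and> le i j \<and> j \<noteq> i} (K i)" using tri i by blast
      show "\<forall>X\<in>{\<Theta> j | j. j \<in> {1..t} \<and> le i j \<and> j \<noteq> i}. homzero C (Q i) (shO C X)"
        using hQ1 i by blast
    qed
    show "indecomposable C (\<Theta> i)"
      using theta_indec[OF T] indQ i Th h1 tri by blast
  next
    fix i j assume i: "i \<in> {1..t}" and j: "j \<in> {1..t}" and "le i j \<and> j \<noteq> i"
    then show "homzero C (\<Theta> j) (\<Theta> i)" using hz by blast
  next
    fix i j assume i: "i \<in> {1..t}" and j: "j \<in> {1..t}" and lij: "le i j"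
    have T: "(K j, Q j, \<Theta> j, \<alpha> j, \<beta> j, \<gamma> j) \<in> Tri C" using tri j by blast
    have Yi: "\<Theta> i \<in> Ob C" using Th i by blast
    have "homzero C (K j) (\<Theta> i)"
    proof (rule filt_contra[OF _ Yi])
      show "filt C {\<Theta> l | l. l \<in> {1..t} \<and> le j l \<and> l \<noteq> j} (K j)" using tri j by blast
      show "\<forall>X\<in>{\<Theta> l | l. l \<in> {1..t} \<and> le j l \<and> l \<noteq> j}. homzero C X (\<Theta> i)"
      proof
        fix X assume "X \<in> {\<Theta> l | l. l \<in> {1..t} \<and> le j l \<and> l \<noteq> j}"
        then obtain l where l: "X = \<Theta> l" "l \<in> {1..t}" "le j l" "l \<noteq> j" by blast
        have "le i l" using trans[OF i j l(2) lij l(3)] .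
        moreover have "l \<noteq> i" using antis[OF i j lij] l by blast
        ultimately show "homzero C X (\<Theta> i)" using hz i l by blast
      qed
    qed
    then have hK: "homzero C (shO C (K j)) (shO C (\<Theta> i))" using homzero_shift by blast
    show "homzero C (\<Theta> j) (shO C (\<Theta> i))"
      using vanish_via_tri[OF T hQ1[OF j i] hK] .
  next
    fix i j assume i: "i \<in> {1..t}" and j: "j \<in> {1..t}"
    have T: "(K i, Q i, \<Theta> i, \<alpha> i, \<beta> i, \<gamma> i) \<in> Tri C" using tri i by blast
    have Yj: "\<Theta> j \<in> Ob C" using Th j by blast
    have K1: "shO C (K i) \<in> Ob C" using tri_hom[OF T] shO_ob by blast
    have "homzero C (shO C (shO C (K i))) (shO C (shinv C (\<Theta> j)))"
      using assms(3) i j shinv[OF Yj] by simp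
    then have hK: "homzero C (shO C (K i)) (shinv C (\<Theta> j))"
      using homzero_unshift[OF K1] shinv[OF Yj] by blast
    show "homzero C (\<Theta> i) (shinv C (\<Theta> j))"
      using vanish_via_tri[OF T hQ2[OF i j] hK] .
  qed
qed

end
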